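(* Let $(X,\mathbb{Z}^k,T)$ be a $\mathbb{Z}^k$-action, let $d$ be a compatible metric on $X$, let $1\le h\le k$, and let $V\subseteq\mathbb{R}^k$ be an $h$-dimensional linear subspace. Then the quantity $$\lim_{\epsilon\to0}\ \liminf_{N\to\infty}\frac{\mathrm{Widim}_\epsilon\big(X,d^T_{B_r(V)\cap[-N,N]^k}\big)}{\mathrm{vol}_h\big(V\cap[-N,N]^k\big)}$$ is the same for every $r>\sqrt{k}/2$.
   Context: A $\mathbb{Z}^k$-action $(X,\mathbb{Z}^k,T)$ is a compact metric space with a continuous action $T\colon\mathbb{Z}^k\times X\to X$, $(n,x)\mapsto T^nx$. An $\epsilon$-embedding of $(X,d)$ is a continuous $f\colon X\to Y$ with $f(x)=f(x')\Rightarrow d(x,x')<\epsilon$. $\mathrm{Widim}_\epsilon(X,d)$ is the minimal topological dimension of a compact metric space $K$ admitting an $\epsilon$-embedding $X\to K$. $d^T_\Omega(x,x')=\max_{n\in\Omega}d(T^nx,T^nx')$ for finite $\Omega\subset\mathbb{Z}^k$. $B_r(V)=\{u\in\mathbb{Z}^k: |u-w|<r\text{ for some }w\in V\}$. $[-N,N]^k$ is the integer cube, or the real cube when intersected with $V$. $\mathrm{vol}_h$ is $h$-dimensional volume in $V$. *)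

theory Defs
  imports "HOL-Analysis.Analysis"
begin

definition covering_dim_le :: "'a topology \<Rightarrow> nat \<Rightarrow> bool" where
  "covering_dim_le U n \<longleftrightarrow>
     (\<forall>\<U>. finite \<U> \<and> (\<forall>A\<in>\<U>. openin U A) \<and> topspace U \<subseteq> \<Union>\<U> \<longrightarrow>
        (\<exists>\<V>. finite \<V> \<and> (\<forall>B\<in>\<V>. openin U B) \<and> topspace U \<subseteq> \<Union>\<V> \<and>
             (\<forall>B\<in>\<V>. \<exists>A\<in>\<U>. B \<subseteq> A) \<and>
             (\<forall>x\<in>topspace U. card {B\<in>\<V>. x \<in> B} \<le> n + 1)))"

definition topdim :: "'a topology \<Rightarrow> enat" where
  "topdim U = (INF n\<in>{n. covering_dim_le U n}. enat n)"

definition eps_embedding ::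
    "real \<Rightarrow> 'a set \<Rightarrow> ('a \<Rightarrow> 'a \<Rightarrow> real) \<Rightarrow> 'b topology \<Rightarrow> ('a \<Rightarrow> 'b) \<Rightarrow> bool" where
  "eps_embedding \<epsilon> X d K f \<longleftrightarrow>
     continuous_map (Metric_space.mtopology X d) K f \<and>
     (\<forall>x\<in>X. \<forall>x'\<in>X. f x = f x' \<longrightarrow> d x x' < \<epsilon>)"

text \<open>Compact metric spaces are represented (up to homeomorphism) as
  compact subsets of \<open>\<nat> \<Rightarrow> \<real>\<close> with the product topology; every compact metrizable
  space embeds into the Hilbert cube, so no generality is lost.\<close>
definition Widim :: "real \<Rightarrow> 'a set \<Rightarrow> ('a \<Rightarrow> 'a \<Rightarrow> real) \<Rightarrow> enat" where
  "Widim \<epsilon> X d =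
     (INF K\<in>{K :: (nat \<Rightarrow> real) set. compact K \<and>
                 (\<exists>f. eps_embedding \<epsilon> X d (top_of_set K) f)}. topdim (top_of_set K))"

definition Zk_action :: "'a set \<Rightarrow> ('a \<Rightarrow> 'a \<Rightarrow> real) \<Rightarrow> (int^'k \<Rightarrow> 'a \<Rightarrow> 'a) \<Rightarrow> bool" where
  "Zk_action X d T \<longleftrightarrow>
     Metric_space X d \<and> compact_space (Metric_space.mtopology X d) \<and>
     (\<forall>n. continuous_map (Metric_space.mtopology X d) (Metric_space.mtopology X d) (T n)) \<and>
     (\<forall>x\<in>X. T 0 x = x) \<and>
     (\<forall>m n. \<forall>x\<in>X. T (m + n) x = T m (T n x))"

definition dyn_metric ::
    "('a \<Rightarrow> 'a \<Rightarrow> real) \<Rightarrow> (int^'k \<Rightarrow> 'a \<Rightarrow> 'a) \<Rightarrow> (int^'k) set \<Rightarrow> 'a \<Rightarrow> 'a \<Rightarrow> real" where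
  "dyn_metric d T \<Omega> x x' = Max ((\<lambda>n. d (T n x) (T n x')) ` \<Omega>)"

definition vec_of_int :: "int^'k \<Rightarrow> real^'k" where
  "vec_of_int u = (\<chi> i. real_of_int (u $ i))"

definition nbhd_lattice :: "real \<Rightarrow> (real^'k) set \<Rightarrow> (int^'k) set" where
  "nbhd_lattice r V = {u. \<exists>w\<in>V. norm (vec_of_int u - w) < r}"

definition int_cube :: "nat \<Rightarrow> (int^'k) set" where
  "int_cube N = {u. \<forall>i. \<bar>u $ i\<bar> \<le> int N}"

definition real_cube :: "nat \<Rightarrow> (real^'k) set" where
  "real_cube N = {x. \<forall>i. \<bar>x $ i\<bar> \<le> real N}"

definition subspace_vol :: "'h::finite itself \<Rightarrow> (real^'k) set \<Rightarrow> (real^'k) set \<Rightarrow> real" where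
  "subspace_vol _ V S =
     (let L = (SOME L :: real^'h \<Rightarrow> real^'k. linear L \<and> (\<forall>y. norm (L y) = norm y) \<and> range L = V)
      in measure lborel (L -` S))"

definition mdim_quantity ::
    "'h::finite itself \<Rightarrow> 'a set \<Rightarrow> ('a \<Rightarrow> 'a \<Rightarrow> real) \<Rightarrow> (int^'k \<Rightarrow> 'a \<Rightarrow> 'a) \<Rightarrow>
     (real^'k) set \<Rightarrow> real \<Rightarrow> real \<Rightarrow> ereal" where
  "mdim_quantity H X d T V r \<epsilon> =
     liminf (\<lambda>N. ereal_of_enat (Widim \<epsilon> X (dyn_metric d T (nbhd_lattice r V \<inter> int_cube N)))
                 / ereal (subspace_vol H V (V \<inter> real_cube N)))"

end

theory Submission
  imports Defs
begin


lemma za_basic: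
  assumes "Zk_action X d T"
  shows "Metric_space X d" "compact_space (Metric_space.mtopology X d)"
    "\<And>n. continuous_map (Metric_space.mtopology X d) (Metric_space.mtopology X d) (T n)"
    "\<And>n x. x \<in> X \<Longrightarrow> T n x \<in> X"
    "\<And>n x. x \<in> X \<Longrightarrow> T (-n) (T n x) = x"
    "\<And>m n x. x \<in> X \<Longrightarrow> T (m + n) x = T m (T n x)"
proof -
  show ms: "Metric_space X d" using assms by (simp add: Zk_action_def)
  show "compact_space (Metric_space.mtopology X d)" using assms by (simp add: Zk_action_def)
  show c: "\<And>n. continuous_map (Metric_space.mtopology X d) (Metric_space.mtopology X d) (T n)"
    using assms by (simp add: Zk_action_def)
  show "\<And>n x. x \<in> X \<Longrightarrow> T n x \<in> X"
    using c[unfolded continuous_map_def] Metric_space.topspace_mtopology[OF ms] by blast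
  show "\<And>m n x. x \<in> X \<Longrightarrow> T (m + n) x = T m (T n x)" using assms by (simp add: Zk_action_def)
  then show "\<And>n x. x \<in> X \<Longrightarrow> T (-n) (T n x) = x" using assms
    by (metis Zk_action_def add.left_inverse)
qed

lemma ucont:
  assumes ms: "Metric_space X d" and "compact_space (Metric_space.mtopology X d)"
    and "continuous_map (Metric_space.mtopology X d) (Metric_space.mtopology X d) f"
    and "e > 0"
  shows "\<exists>\<delta>>0. \<forall>x\<in>X. \<forall>y\<in>X. d x y < \<delta> \<longrightarrow> d (f x) (f y) < e"
proof -
  interpret Metric_space X d by (fact ms)
  have "uniformly_continuous_map (metric(X,d)) (metric(X,d)) f"
    by (rule continuous_imp_uniformly_continuous_map) (simp add: assms)
  then show ?thesis using assms(4) unfolding uniformly_continuous_map_def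
    by (metis commute mdist_metric mspace_metric)
qed

lemma finite_delta:
  assumes "finite I" "\<And>i. i \<in> I \<Longrightarrow> \<exists>\<delta>>0. \<forall>x\<in>X. \<forall>y\<in>X. (d x y::real) < \<delta> \<longrightarrow> P i x y"
  shows "\<exists>\<delta>>0. \<forall>i\<in>I. \<forall>x\<in>X. \<forall>y\<in>X. d x y < \<delta> \<longrightarrow> P i x y"
  using assms
proof (induction I rule: finite_induct)
  case empty
  then show ?case by (auto intro: exI[of _ 1])
next
  case (insert a F)
  then obtain \<delta>1 where d1: "\<delta>1 > 0" "\<forall>i\<in>F. \<forall>x\<in>X. \<forall>y\<in>X. d x y < \<delta>1 \<longrightarrow> P i x y" by auto
  obtain \<delta>2 where d2: "\<delta>2 > 0" "\<forall>x\<in>X. \<forall>y\<in>X. d x y < \<delta>2 \<longrightarrow> P a x y" using insert.prems[of a] by blast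
  show ?case using d1 d2 by (intro exI[of _ "min \<delta>1 \<delta>2"]) auto
qed

lemma mtop_eq:
  assumes m1: "Metric_space X d1" and m2: "Metric_space X d2"
    and a: "\<And>x e. x \<in> X \<Longrightarrow> e > 0 \<Longrightarrow> \<exists>\<delta>>0. \<forall>y\<in>X. d1 x y < \<delta> \<longrightarrow> d2 x y < e"
    and b: "\<And>x e. x \<in> X \<Longrightarrow> e > 0 \<Longrightarrow> \<exists>\<delta>>0. \<forall>y\<in>X. d2 x y < \<delta> \<longrightarrow> d1 x y < e"
  shows "Metric_space.mtopology X d1 = Metric_space.mtopology X d2"
proof -
  have *: "openin (Metric_space.mtopology X d1) U \<Longrightarrow> openin (Metric_space.mtopology X d2) U"
    if m1: "Metric_space X d1" and m2: "Metric_space X d2"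
      and b: "\<And>x e. x \<in> X \<Longrightarrow> e > 0 \<Longrightarrow> \<exists>\<delta>>0. \<forall>y\<in>X. d2 x y < \<delta> \<longrightarrow> d1 x y < e"
    for U d1 d2
  proof -
    assume o: "openin (Metric_space.mtopology X d1) U"
    have "U \<subseteq> X" using o Metric_space.openin_mtopology[OF m1] by blast
    moreover have "\<exists>r>0. Metric_space.mball X d2 x r \<subseteq> U" if "x \<in> U" for x
    proof -
      obtain r where r: "r > 0" "Metric_space.mball X d1 x r \<subseteq> U"
        using o Metric_space.openin_mtopology[OF m1] \<open>x \<in> U\<close> by blast
      obtain \<delta> where "\<delta> > 0" "\<forall>y\<in>X. d2 x y < \<delta> \<longrightarrow> d1 x y < r"
        using b[of x r] r \<open>x \<in> U\<close> \<open>U \<subseteq> X\<close> by blast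
      then show ?thesis using r
        by (intro exI[of _ \<delta>]) (auto simp: Metric_space.in_mball[OF m1] Metric_space.in_mball[OF m2])
    qed
    ultimately show ?thesis using Metric_space.openin_mtopology[OF m2] by blast
  qed
  show ?thesis
    using *[OF m1 m2 b] *[OF m2 m1 a] by (metis topology_eq)
qed



lemma dyn_less:
  assumes "finite \<Omega>" "\<Omega> \<noteq> {}"
  shows "dyn_metric d T \<Omega> x y < e \<longleftrightarrow> (\<forall>n\<in>\<Omega>. d (T n x) (T n y) < e)"
  using assms by (simp add: dyn_metric_def)

lemma dyn_ge:
  assumes "finite \<Omega>" "n \<in> \<Omega>"
  shows "d (T n x) (T n y) \<le> dyn_metric d T \<Omega> x y"
  using assms by (simp add: dyn_metric_def)

lemma dyn_Metric:
  assumes za: "Zk_action X d T" and fin: "finite \<Omega>" and ne: "\<Omega> \<noteq> {}"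
  shows "Metric_space X (dyn_metric d T \<Omega>)"
proof -
  note b = za_basic[OF za]
  interpret Metric_space X d by (fact b(1))
  obtain n0 where n0: "n0 \<in> \<Omega>" using ne by blast
  show ?thesis
  proof
    fix x y
    show "0 \<le> dyn_metric d T \<Omega> x y" using dyn_ge[OF fin n0, of d T x y] nonneg order_trans by blast
    show "dyn_metric d T \<Omega> x y = dyn_metric d T \<Omega> y x"
      unfolding dyn_metric_def by (simp add: commute)
  next
    fix x y assume xy: "x \<in> X" "y \<in> X"
    show "(dyn_metric d T \<Omega> x y = 0) = (x = y)"
    proof
      assume "dyn_metric d T \<Omega> x y = 0"
      then have "d (T n0 x) (T n0 y) \<le> 0" using dyn_ge[OF fin n0, of d T x y] by simp
      then have "T n0 x = T n0 y" using b(4) xy nonneg by (meson order.antisym zero)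
      then show "x = y" using b(5) xy by metis
    next
      assume "x = y"
      then have "(\<lambda>n. d (T n x) (T n y)) ` \<Omega> = {0}" using ne b(4) xy by auto
      then show "dyn_metric d T \<Omega> x y = 0" by (simp add: dyn_metric_def)
    qed
  next
    fix x y z assume xyz: "x \<in> X" "y \<in> X" "z \<in> X"
    have "d (T n x) (T n z) \<le> dyn_metric d T \<Omega> x y + dyn_metric d T \<Omega> y z" if "n \<in> \<Omega>" for n
      using triangle[OF b(4)[OF xyz(1)] b(4)[OF xyz(2)] b(4)[OF xyz(3)], of n n n]
        dyn_ge[OF fin that, of d T x y] dyn_ge[OF fin that, of d T y z] by linarith
    then show "dyn_metric d T \<Omega> x z \<le> dyn_metric d T \<Omega> x y + dyn_metric d T \<Omega> y z"
      using fin ne by (simp add: dyn_metric_def)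
  qed
qed

lemma dyn_top:
  assumes za: "Zk_action X d T" and fin: "finite \<Omega>" and ne: "\<Omega> \<noteq> {}"
  shows "Metric_space.mtopology X (dyn_metric d T \<Omega>) = Metric_space.mtopology X d"
proof -
  note b = za_basic[OF za]
  obtain n0 where n0: "n0 \<in> \<Omega>" using ne by blast
  show ?thesis
  proof (rule mtop_eq[OF dyn_Metric[OF za fin ne] b(1)])
    fix x e assume "x \<in> X" "(e::real) > 0"
    obtain \<delta> where "\<delta> > 0" "\<forall>x\<in>X. \<forall>y\<in>X. d x y < \<delta> \<longrightarrow> d (T (-n0) x) (T (-n0) y) < e"
      using ucont[OF b(1) b(2) b(3) \<open>e>0\<close>] by blast
    then show "\<exists>\<delta>>0. \<forall>y\<in>X. dyn_metric d T \<Omega> x y < \<delta> \<longrightarrow> d x y < e"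
      using \<open>x \<in> X\<close> b(4,5) dyn_less[OF fin ne] n0 by metis
  next
    fix x e assume "x \<in> X" "(e::real) > 0"
    have "\<exists>\<delta>>0. \<forall>n\<in>\<Omega>. \<forall>x\<in>X. \<forall>y\<in>X. d x y < \<delta> \<longrightarrow> d (T n x) (T n y) < e"
      by (rule finite_delta[OF fin]) (rule ucont[OF b(1) b(2) b(3) \<open>e>0\<close>])
    then show "\<exists>\<delta>>0. \<forall>y\<in>X. d x y < \<delta> \<longrightarrow> dyn_metric d T \<Omega> x y < e"
      using \<open>x \<in> X\<close> dyn_less[OF fin ne] by metis
  qed
qed

lemma Widim_mono:
  assumes "Metric_space.mtopology X m1 = Metric_space.mtopology X m2"
    and "\<And>x y. x\<in>X \<Longrightarrow> y\<in>X \<Longrightarrow> m2 x y < \<delta> \<Longrightarrow> m1 x y < \<epsilon>"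
  shows "Widim \<epsilon> X m1 \<le> Widim \<delta> X m2"
  unfolding Widim_def
proof (rule INF_superset_mono)
  show "{K :: (nat \<Rightarrow> real) set. compact K \<and> (\<exists>f. eps_embedding \<delta> X m2 (top_of_set K) f)}
     \<subseteq> {K :: (nat \<Rightarrow> real) set. compact K \<and> (\<exists>f. eps_embedding \<epsilon> X m1 (top_of_set K) f)}"
  proof
    fix K assume "K \<in> {K :: (nat \<Rightarrow> real) set. compact K \<and> (\<exists>f. eps_embedding \<delta> X m2 (top_of_set K) f)}"
    then obtain f where "compact K" "eps_embedding \<delta> X m2 (top_of_set K) f" by auto
    then have "eps_embedding \<epsilon> X m1 (top_of_set K) f" using assms by (auto simp: eps_embedding_def)
    then show "K \<in> {K :: (nat \<Rightarrow> real) set. compact K \<and> (\<exists>f. eps_embedding \<epsilon> X m1 (top_of_set K) f)}"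
      using \<open>compact K\<close> by blast
  qed
qed simp



lemma finite_int_cube: "finite (int_cube N :: (int^'k) set)"
proof -
  have "int_cube N \<subseteq> (\<lambda>f. vec_lambda f) ` (PiE (UNIV::'k set) (\<lambda>_. {-int N..int N}))"
  proof
    fix u :: "int^'k" assume "u \<in> int_cube N"
    then have "(\<lambda>i. u $ i) \<in> PiE UNIV (\<lambda>_. {-int N..int N})" by (force simp: int_cube_def abs_le_iff)
    moreover have "u = vec_lambda (\<lambda>i. u $ i)" by simp
    ultimately show "u \<in> (\<lambda>f. vec_lambda f) ` (PiE UNIV (\<lambda>_. {-int N..int N}))" by blast
  qed
  moreover have "finite (PiE (UNIV::'k set) (\<lambda>_. {-int N..int N}))" by (intro finite_PiE) auto
  ultimately show ?thesis using finite_subset by blast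
qed

lemma zero_in_lat:
  assumes "subspace V" "r > 0"
  shows "(0::int^'k) \<in> nbhd_lattice r (V::(real^'k) set) \<inter> int_cube N"
proof -
  have "vec_of_int (0::int^'k) = 0" by (simp add: vec_of_int_def vec_eq_iff)
  then show ?thesis using assms subspace_0[OF assms(1)]
    by (auto simp: nbhd_lattice_def int_cube_def intro!: bexI[of _ 0])
qed

lemma vec_of_int_diff: "vec_of_int (u - v) = vec_of_int u - vec_of_int v"
  by (simp add: vec_of_int_def vec_eq_iff)

lemma round_norm:
  fixes w :: "real^'k"
  shows "norm (vec_of_int (\<chi> i. round (w $ i)) - w) \<le> sqrt (real CARD('k)) / 2"
proof -
  let ?z = "vec_of_int (\<chi> i. round (w $ i)) - w"
  have zi: "\<bar>?z $ i\<bar> \<le> 1/2" for i using of_int_round_abs_le[of "w $ i"] by (simp add: vec_of_int_def)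
  have "norm ?z = sqrt (\<Sum>i\<in>UNIV. (?z $ i)^2)"
    by (simp add: norm_vec_def L2_set_def)
  also have "\<dots> \<le> sqrt (\<Sum>i\<in>(UNIV::'k set). 1/4)"
  proof (rule real_sqrt_le_mono, rule sum_mono)
    fix i
    have "(?z $ i)^2 = \<bar>?z $ i\<bar>^2" by simp
    also have "\<dots> \<le> (1/2)^2" using zi[of i] by (intro power_mono) auto
    finally show "(?z $ i)^2 \<le> 1/4" by (simp add: power2_eq_square)
  qed
  also have "\<dots> = sqrt (real CARD('k)) / 2"
    by (simp add: real_sqrt_divide)
  finally show ?thesis .
qed

lemma lat_decomp:
  fixes V :: "(real^'k) set"
  assumes r1: "r1 > sqrt (real CARD('k)) / 2"
    and u: "u \<in> nbhd_lattice r2 V \<inter> int_cube N"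
  shows "\<exists>f v. u = f + v \<and> f \<in> int_cube (nat \<lceil>r1 + r2\<rceil>) \<and>
           v \<in> nbhd_lattice r1 V \<inter> int_cube (N + nat \<lceil>r1 + r2\<rceil>)"
proof -
  let ?c = "nat \<lceil>r1 + r2\<rceil>"
  obtain w where w: "w \<in> V" "norm (vec_of_int u - w) < r2"
    using u by (auto simp: nbhd_lattice_def)
  define v :: "int^'k" where "v = (\<chi> i. round (w $ i))"
  define f where "f = u - v"
  have vn: "norm (vec_of_int v - w) < r1" using round_norm[of w] r1 by (simp add: v_def)
  have "norm (vec_of_int f) = norm ((vec_of_int u - w) - (vec_of_int v - w))"
    by (simp add: f_def vec_of_int_diff)
  also have "\<dots> \<le> norm (vec_of_int u - w) + norm (vec_of_int v - w)" by (rule norm_triangle_ineq4)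
  also have "\<dots> < r2 + r1" using w vn by simp
  finally have fn: "norm (vec_of_int f) < r1 + r2" by simp
  have fi: "\<bar>f $ i\<bar> \<le> int ?c" for i
  proof -
    have "real_of_int \<bar>f $ i\<bar> \<le> norm (vec_of_int f)"
      using component_le_norm_cart[of "vec_of_int f" i] by (simp add: vec_of_int_def)
    then have "real_of_int \<bar>f $ i\<bar> \<le> r1 + r2" using fn by simp
    then have "\<bar>f $ i\<bar> \<le> \<lceil>r1 + r2\<rceil>" by linarith
    then show ?thesis by linarith
  qed
  have ui: "\<bar>u $ i\<bar> \<le> int N" for i using u by (auto simp: int_cube_def)
  have "\<bar>v $ i\<bar> \<le> int (N + ?c)" for i
  proof -
    have "v $ i = u $ i - f $ i" by (simp add: f_def)
    then show ?thesis using fi[of i] ui[of i] by simp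
  qed
  then have "v \<in> nbhd_lattice r1 V \<inter> int_cube (N + ?c)"
    using vn w(1) by (auto simp: nbhd_lattice_def int_cube_def)
  moreover have "f \<in> int_cube ?c" using fi by (simp add: int_cube_def)
  moreover have "u = f + v" by (simp add: f_def)
  ultimately show ?thesis by blast
qed



lemma vol_formula:
  fixes V :: "(real^'k) set"
  assumes sV: "subspace V" and dV: "dim V = CARD('h::finite)"
  shows "\<exists>v1>0. \<forall>N\<ge>1. subspace_vol TYPE('h) V (V \<inter> real_cube N) = v1 * real N ^ CARD('h)"
proof -
  define P where "P = (\<lambda>L :: real^'h \<Rightarrow> real^'k. linear L \<and> (\<forall>y. norm (L y) = norm y) \<and> range L = V)"
  obtain f :: "real^'h \<Rightarrow> real^'k" where f: "linear f" "f ` UNIV = V" "\<And>x. x \<in> UNIV \<Longrightarrow> norm (f x) = norm x"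
  proof (rule isometry_subspaces[OF subspace_UNIV sV])
    show "dim (UNIV :: (real^'h) set) = dim V" using dV by simp
  qed blast
  define L where "L = (SOME L. P L)"
  have "P L" unfolding L_def by (rule someI[of P f]) (use f in \<open>auto simp: P_def\<close>)
  then have lin: "linear L" and iso: "\<And>y. norm (L y) = norm y" and rng: "range L = V" by (auto simp: P_def)
  have volS: "subspace_vol TYPE('h) V S = measure lborel (L -` S)" for S
    by (simp add: subspace_vol_def L_def P_def)
  have bl: "bounded_linear L" using lin by (simp add: linear_conv_bounded_linear)
  have cont: "continuous_on UNIV L" using bl by (simp add: linear_continuous_on)
  have pre: "L -` (V \<inter> real_cube N) = L -` real_cube N" for N using rng by auto
  have meas: "L -` real_cube N \<in> sets borel" for N
  proof -
    have "closed {y. \<forall>i. \<bar>(L y) $ i\<bar> \<le> real N}"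
      by (intro closed_Collect_all closed_Collect_le continuous_intros continuous_on_compose2[OF cont]) auto
    then show ?thesis by (simp add: real_cube_def borel_closed)
  qed
  define A where "A = L -` real_cube 1"
  have scale: "emeasure lborel (L -` real_cube N) = ennreal (real N ^ CARD('h)) * emeasure lborel A"
    if "N \<ge> 1" for N
  proof -
    have N0: "real N \<noteq> 0" using that by simp
    have eq: "lborel = density (distr lborel borel (\<lambda>x::real^'h. 0 + real N *\<^sub>R x)) (\<lambda>_. \<bar>real N\<bar>^DIM(real^'h))"
      by (rule lborel_affine[OF N0])
    have m: "(\<lambda>x::real^'h. 0 + real N *\<^sub>R x) \<in> lborel \<rightarrow>\<^sub>M borel" by simp
    have "(\<lambda>x::real^'h. 0 + real N *\<^sub>R x) -` (L -` real_cube N) \<inter> space lborel = A"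
    proof -
      have "\<bar>real N * (L x) $ i\<bar> \<le> real N \<longleftrightarrow> \<bar>(L x) $ i\<bar> \<le> 1" for x i
        using that by (simp add: abs_mult)
      then show ?thesis
        by (auto simp: A_def real_cube_def linear_cmul[OF lin])
    qed
    then have "emeasure lborel (L -` real_cube N) = ennreal (\<bar>real N\<bar>^DIM(real^'h)) * emeasure lborel A"
      apply (subst eq)
      apply (subst emeasure_density_const)
       apply (simp add: meas)
      apply (subst emeasure_distr[OF m meas])
      by simp
    then show ?thesis by simp
  qed
  have sub1: "ball 0 1 \<subseteq> A"
  proof
    fix y :: "real^'h" assume "y \<in> ball 0 1"
    then have "norm (L y) < 1" by (simp add: iso)
    then have "\<bar>(L y) $ i\<bar> \<le> 1" for i using component_le_norm_cart[of "L y" i] by simp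
    then show "y \<in> A" by (simp add: A_def real_cube_def)
  qed
  have sub2: "A \<subseteq> cball 0 (real CARD('k))"
  proof
    fix y :: "real^'h" assume "y \<in> A"
    then have "\<bar>(L y) $ i\<bar> \<le> 1" for i by (simp add: A_def real_cube_def)
    then have "(\<Sum>i\<in>UNIV. \<bar>(L y) $ i\<bar>) \<le> (\<Sum>i\<in>(UNIV::'k set). 1)"
      by (intro sum_mono) auto
    then have "norm (L y) \<le> (\<Sum>i\<in>(UNIV::'k set). 1)"
      using norm_le_l1_cart[of "L y"] by linarith
    then show "y \<in> cball 0 (real CARD('k))" by (simp add: iso)
  qed
  have Ameas: "A \<in> sets lborel" using meas by (simp add: A_def)
  have fin: "emeasure lborel A < \<infinity>"
    by (rule order_le_less_trans[OF emeasure_mono[OF sub2] emeasure_lborel_cball_finite]) simp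
  have "emeasure lborel (ball (0::real^'h) 1) > 0" by (simp add: emeasure_ball)
  then have pos: "emeasure lborel A > 0"
    by (rule order_less_le_trans[OF _ emeasure_mono[OF sub1 Ameas]])
  define v1 where "v1 = enn2real (emeasure lborel A)"
  have v1: "v1 > 0" using fin pos by (simp add: v1_def enn2real_positive_iff)
  show ?thesis
  proof (intro exI[of _ v1] conjI allI impI v1)
    fix N :: nat assume "N \<ge> 1"
    have "subspace_vol TYPE('h) V (V \<inter> real_cube N) = measure lborel (L -` real_cube N)"
      by (simp only: volS pre)
    also have "\<dots> = enn2real (ennreal (real N ^ CARD('h)) * emeasure lborel A)"
      by (simp add: measure_def scale[OF \<open>N \<ge> 1\<close>])
    also have "\<dots> = v1 * real N ^ CARD('h)"
      by (simp add: enn2real_mult v1_def)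
    finally show "subspace_vol TYPE('h) V (V \<inter> real_cube N) = v1 * real N ^ CARD('h)" .
  qed
qed



lemma lat_fin_ne:
  assumes "subspace V" "r > 0"
  shows "finite (nbhd_lattice r (V::(real^'k) set) \<inter> int_cube N)"
    "nbhd_lattice r V \<inter> int_cube N \<noteq> {}"
  using zero_in_lat[OF assms, of N] finite_int_cube[of N] by auto

lemma card_pos_r:
  assumes "r > sqrt (real CARD('k)) / 2" shows "r > 0"
proof -
  have "sqrt (real CARD('k)) \<ge> 0" by simp
  then show ?thesis using assms by linarith
qed

lemma liminf_div_mono:
  fixes a b :: "nat \<Rightarrow> ereal"
  assumes "\<And>N. N \<ge> 1 \<Longrightarrow> v N > 0" "\<And>N. N \<ge> 1 \<Longrightarrow> a N \<le> b N"
  shows "liminf (\<lambda>N. a N / ereal (v N)) \<le> liminf (\<lambda>N. b N / ereal (v N))"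
  by (rule Liminf_mono) (use assms in \<open>auto simp: eventually_sequentially intro!: exI[of _ 1]\<close>)

lemma ereal_div_rescale:
  fixes x :: ereal
  assumes "x \<ge> 0" "p > 0" "q > 0"
  shows "x / ereal q = ereal (p / q) * (x / ereal p)"
  using assms by (cases x) (auto simp: field_simps)

lemma q_antitone:
  fixes V :: "(real^'k) set"
  assumes za: "Zk_action X d T" and sV: "subspace V" and dV: "dim V = CARD('h::finite)"
    and r: "r > 0" and e: "0 < e" "e \<le> e'"
  shows "mdim_quantity TYPE('h) X d T V r e' \<le> mdim_quantity TYPE('h) X d T V r e"
proof -
  obtain v1 where v1: "v1 > 0" "\<forall>N\<ge>1. subspace_vol TYPE('h) V (V \<inter> real_cube N) = v1 * real N ^ CARD('h)"
    using vol_formula[OF sV dV] by blast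
  show ?thesis unfolding mdim_quantity_def
  proof (rule liminf_div_mono)
    fix N :: nat assume "N \<ge> 1"
    then show "subspace_vol TYPE('h) V (V \<inter> real_cube N) > 0" using v1 by simp
    show "ereal_of_enat (Widim e' X (dyn_metric d T (nbhd_lattice r V \<inter> int_cube N)))
        \<le> ereal_of_enat (Widim e X (dyn_metric d T (nbhd_lattice r V \<inter> int_cube N)))"
      using Widim_mono[of X "dyn_metric d T (nbhd_lattice r V \<inter> int_cube N)" _ e e'] e by auto
  qed
qed

lemma q_compare:
  fixes V :: "(real^'k) set"
  assumes za: "Zk_action X d T" and sV: "subspace V" and dV: "dim V = CARD('h::finite)"
    and r1: "r1 > sqrt (real CARD('k)) / 2" and r2: "r2 > 0" and e: "0 < e"
  shows "\<exists>\<delta>>0. mdim_quantity TYPE('h) X d T V r2 e \<le> mdim_quantity TYPE('h) X d T V r1 \<delta>"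
proof -
  note b = za_basic[OF za]
  have r1p: "r1 > 0" using card_pos_r[OF r1] .
  define c where "c = nat \<lceil>r1 + r2\<rceil>"
  define \<Omega> where "\<Omega> = (\<lambda>r N. nbhd_lattice r V \<inter> int_cube N)"
  obtain \<delta> where \<delta>: "\<delta> > 0" "\<forall>f\<in>int_cube c. \<forall>x\<in>X. \<forall>y\<in>X. d x y < \<delta> \<longrightarrow> d (T f x) (T f y) < e"
    using finite_delta[OF finite_int_cube, of c X d "\<lambda>f x y. d (T f x) (T f y) < e"]
      ucont[OF b(1) b(2) b(3) e] by blast
  have fin1: "finite (\<Omega> r1 N)" "\<Omega> r1 N \<noteq> {}" for N using lat_fin_ne[OF sV r1p] by (auto simp: \<Omega>_def)
  have fin2: "finite (\<Omega> r2 N)" "\<Omega> r2 N \<noteq> {}" for N using lat_fin_ne[OF sV r2] by (auto simp: \<Omega>_def)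
  have W: "Widim e X (dyn_metric d T (\<Omega> r2 N)) \<le> Widim \<delta> X (dyn_metric d T (\<Omega> r1 (N + c)))" for N
  proof (rule Widim_mono)
    show "Metric_space.mtopology X (dyn_metric d T (\<Omega> r2 N)) = Metric_space.mtopology X (dyn_metric d T (\<Omega> r1 (N + c)))"
      using dyn_top[OF za fin1] dyn_top[OF za fin2] by simp
  next
    fix x y assume xy: "x \<in> X" "y \<in> X" and lt: "dyn_metric d T (\<Omega> r1 (N + c)) x y < \<delta>"
    have "d (T u x) (T u y) < e" if u: "u \<in> \<Omega> r2 N" for u
    proof -
      obtain f v where fv: "u = f + v" "f \<in> int_cube c" "v \<in> \<Omega> r1 (N + c)"
        using lat_decomp[OF r1, of u r2 V N] u by (auto simp: \<Omega>_def c_def)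
      have "\<forall>n\<in>\<Omega> r1 (N + c). d (T n x) (T n y) < \<delta>"
        using lt by (simp add: dyn_less[OF fin1(1) fin1(2)])
      then have "d (T v x) (T v y) < \<delta>" using fv(3) by blast
      then have "d (T f (T v x)) (T f (T v y)) < e" using \<delta>(2) fv(2) b(4) xy by blast
      then show ?thesis using fv(1) b(6) xy by simp
    qed
    then show "dyn_metric d T (\<Omega> r2 N) x y < e" by (simp add: dyn_less[OF fin2(1) fin2(2)])
  qed
  obtain v1 where v1: "v1 > 0" "\<forall>N\<ge>1. subspace_vol TYPE('h) V (V \<inter> real_cube N) = v1 * real N ^ CARD('h)"
    using vol_formula[OF sV dV] by blast
  define v where "v = (\<lambda>N. subspace_vol TYPE('h) V (V \<inter> real_cube N))"
  have vpos: "v N > 0" if "N \<ge> 1" for N using v1 that by (simp add: v_def)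
  define a where "a = (\<lambda>N. ereal_of_enat (Widim e X (dyn_metric d T (\<Omega> r2 N))))"
  define bb where "bb = (\<lambda>N. ereal_of_enat (Widim \<delta> X (dyn_metric d T (\<Omega> r1 N))))"
  have q2: "mdim_quantity TYPE('h) X d T V r2 e = liminf (\<lambda>N. a N / ereal (v N))"
    by (simp add: mdim_quantity_def a_def v_def \<Omega>_def)
  have q1: "mdim_quantity TYPE('h) X d T V r1 \<delta> = liminf (\<lambda>N. bb N / ereal (v N))"
    by (simp add: mdim_quantity_def bb_def v_def \<Omega>_def)
  have ratio: "(\<lambda>N. ereal (v (N + c) / v N)) \<longlonglongrightarrow> 1"
  proof -
    have "(\<lambda>N. (1 + real c / real N) ^ CARD('h)) \<longlonglongrightarrow> (1 + 0) ^ CARD('h)"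
      by (intro tendsto_intros)
    then have l: "(\<lambda>N. (1 + real c / real N) ^ CARD('h)) \<longlonglongrightarrow> 1" by simp
    have "eventually (\<lambda>N. (1 + real c / real N) ^ CARD('h) = v (N + c) / v N) sequentially"
    proof (rule eventually_sequentiallyI[of 1])
      fix N :: nat assume N: "N \<ge> 1"
      have "v (N + c) / v N = (v1 * real (N + c) ^ CARD('h)) / (v1 * real N ^ CARD('h))"
        using v1 N by (simp add: v_def)
      also have "\<dots> = (real (N + c) / real N) ^ CARD('h)" using v1 N by (simp add: power_divide)
      also have "real (N + c) / real N = 1 + real c / real N" using N by (simp add: field_simps)
      finally show "(1 + real c / real N) ^ CARD('h) = v (N + c) / v N" by simp
    qed
    then have "(\<lambda>N. v (N + c) / v N) \<longlonglongrightarrow> 1" using l by (rule Lim_transform_eventually[rotated])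
    then show ?thesis using tendsto_ereal[of _ 1] by (simp add: one_ereal_def)
  qed
  have "liminf (\<lambda>N. a N / ereal (v N)) \<le> liminf (\<lambda>N. ereal (v (N + c) / v N) * (bb (N + c) / ereal (v (N + c))))"
  proof (rule Liminf_mono, rule eventually_sequentiallyI[of 1])
    fix N :: nat assume N: "N \<ge> 1"
    have "a N / ereal (v N) \<le> bb (N + c) / ereal (v N)"
      using W[of N] vpos[OF N] by (simp add: a_def bb_def)
    also have "\<dots> = ereal (v (N + c) / v N) * (bb (N + c) / ereal (v (N + c)))"
      by (rule ereal_div_rescale) (use vpos N in \<open>auto simp: bb_def\<close>)
    finally show "a N / ereal (v N) \<le> ereal (v (N + c) / v N) * (bb (N + c) / ereal (v (N + c)))" .
  qed
  also have "\<dots> = 1 * liminf (\<lambda>N. bb (N + c) / ereal (v (N + c)))"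
    by (rule ereal_liminf_lim_mult[OF ratio]) auto
  also have "\<dots> = liminf (\<lambda>N. bb N / ereal (v N))"
    using liminf_shift_k[of "\<lambda>N. bb N / ereal (v N)" c] by simp
  finally show ?thesis using q1 q2 \<delta>(1) by auto
qed

lemma antitone_tendsto:
  fixes q :: "real \<Rightarrow> ereal"
  assumes mono: "\<And>a b. 0 < a \<Longrightarrow> a \<le> b \<Longrightarrow> q b \<le> q a"
  shows "(q \<longlongrightarrow> (SUP e\<in>{0<..}. q e)) (at_right 0)"
proof (rule order_tendstoI)
  fix a assume "a < (SUP e\<in>{0<..}. q e)"
  then obtain e where e: "e > 0" "a < q e" by (auto simp: less_SUP_iff)
  have "eventually (\<lambda>y. 0 < y \<and> y < e) (at_right (0::real))"
    using e(1) by (auto simp: eventually_at_right_field intro!: exI[of _ e])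
  then show "eventually (\<lambda>y. a < q y) (at_right 0)"
    by eventually_elim (use e mono in \<open>fastforce intro: order_less_le_trans\<close>)
next
  fix a assume S: "(SUP e\<in>{0<..}. q e) < a"
  have qa: "q y < a" if "y > 0" for y
    using order_le_less_trans[OF SUP_upper[of y "{0<..}" q] S] that by simp
  show "eventually (\<lambda>y. q y < a) (at_right 0)"
    by (rule eventually_mono[OF eventually_at_right_less[of "0::real"]]) (rule qa)
qed


theorem proposition3p1:
  fixes X :: "'a set" and d :: "'a \<Rightarrow> 'a \<Rightarrow> real" and T :: "int^'k \<Rightarrow> 'a \<Rightarrow> 'a"
    and V :: "(real^'k) set" and r1 r2 :: real
  assumes "Zk_action X d T"
    and "subspace V" and "dim V = CARD('h::finite)"
    and "r1 > sqrt (real CARD('k)) / 2" and "r2 > sqrt (real CARD('k)) / 2"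
  shows "\<exists>L. ((mdim_quantity TYPE('h) X d T V r1) \<longlongrightarrow> L) (at_right 0) \<and>
             ((mdim_quantity TYPE('h) X d T V r2) \<longlongrightarrow> L) (at_right 0)"
proof -
  define S where "S = (\<lambda>r. SUP e\<in>{0<..}. mdim_quantity TYPE('h) X d T V r e)"
  have lim: "((mdim_quantity TYPE('h) X d T V r) \<longlongrightarrow> S r) (at_right 0)" if "r > 0" for r
    unfolding S_def
    by (rule antitone_tendsto) (rule q_antitone[OF assms(1,2,3) that])
  have le: "S rb \<le> S ra" if rab: "ra > sqrt (real CARD('k)) / 2" "rb > 0" for ra rb
    unfolding S_def
  proof (rule SUP_least)
    fix e :: real assume "e \<in> {0<..}"
    then obtain \<delta> where "\<delta> > 0" "mdim_quantity TYPE('h) X d T V rb e \<le> mdim_quantity TYPE('h) X d T V ra \<delta>"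
      using q_compare[OF assms(1,2,3) rab] by auto
    then show "mdim_quantity TYPE('h) X d T V rb e \<le> (SUP e\<in>{0<..}. mdim_quantity TYPE('h) X d T V ra e)"
      by (meson SUP_upper greaterThan_iff order_trans)
  qed
  have p1: "r1 > 0" and p2: "r2 > 0" using card_pos_r assms(4,5) by auto
  have "S r1 = S r2" using le[OF assms(4) p2] le[OF assms(5) p1] by simp
  then show ?thesis using lim[OF p1] lim[OF p2] by auto
qed

end
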